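(* Let $\mathcal L$ be a finite atomic lattice with set of atoms $\mathfrak A(\mathcal L)$, and let $\mathcal G$ be a building set in $\mathcal L$. Let $\mathcal I\subseteq \mathbb Z[\{x_G\}_{G\in\mathcal G}]$ be the ideal generated by the monomials $\prod_{i=1}^t x_{G_i}$ for all subsets $\{G_1,\dots,G_t\}\subseteq\mathcal G$ that are not nested, together with the linear forms $\sum_{G\in\mathcal G,\,G\geq H} x_G$ for all atoms $H\in\mathfrak A(\mathcal L)$. Then $\mathcal I$ is also generated by the following polynomials: (a) $h_{\mathcal S}=\prod_{G\in\mathcal S}x_G$ for every subset $\mathcal S\subseteq\mathcal G$ that is not nested; (b) $g_{\mathcal H,B}=\prod_{i=1}^k x_{A_i}\,\Big(\sum_{G\in\mathcal G,\,G\geq B}x_G\Big)^{d}$, where $\mathcal H$ is a nested set, $A_1,\dots,A_k$ are the maximal elements of $\mathcal H$, $B\in\mathcal G$ with $B>A:=\bigvee_{i=1}^kA_i$ (the join of the empty set being $\hat 0$), and $d=d(A,B)$.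
   Context: A lattice is a finite poset in which every subset has a join $\vee$ and a meet $\wedge$; $\hat 0$ is its least element. It is atomic if every element is a join of atoms. For $X\le Y$ write $[X,Y]=\{Z: X\le Z\le Y\}$ and for $\mathcal G\subseteq\mathcal L$ write $\mathcal G_{\le X}=\{G\in\mathcal G: G\le X\}$. A subset $\mathcal G\subseteq\mathcal L\setminus\{\hat 0\}$ is a building set if for every $X\in\mathcal L\setminus\{\hat0\}$, with $\{G_1,\dots,G_k\}$ the set of maximal elements of $\mathcal G_{\le X}$, there is a poset isomorphism $\varphi_X:\prod_{i=1}^k[\hat0,G_i]\to[\hat0,X]$ with $\varphi_X(\hat0,\dots,G_i,\dots,\hat0)=G_i$ for all $i$. A subset $\mathcal S\subseteq\mathcal G$ is nested if for every set of pairwise incomparable elements $G_1,\dots,G_t\in\mathcal S$ with $t\ge2$, the join $G_1\vee\dots\vee G_t$ does not belong to $\mathcal G$. For $X\le Y$ in an atomic lattice, $d(X,Y)$ is the minimal number $d$ of atoms $H_1,\dots,H_d$ such that $Y=X\vee\bigvee_{i=1}^dH_i$. *)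

theory Defs
  imports "HOL-Library.Poly_Mapping"
begin

text \<open>The finite lattice is a type of class finite + complete_lattice (every finite
nonempty lattice is complete); bot is the least element.\<close>

definition atoms :: "'a::{finite,complete_lattice} set" where
  "atoms = {H. bot < H \<and> (\<forall>Z. bot < Z \<and> Z \<le> H \<longrightarrow> Z = H)}"

definition atomic_lattice :: "'a::{finite,complete_lattice} itself \<Rightarrow> bool" where
  "atomic_lattice _ \<longleftrightarrow> (\<forall>X::'a. X = Sup {H \<in> atoms. H \<le> X})"

definition maximals :: "'a::order set \<Rightarrow> 'a set" where
  "maximals S = {G \<in> S. \<not> (\<exists>G'\<in>S. G < G')}"

text \<open>Product of intervals [bot,G], G in M, modelled as functions on M (bot outside M),
ordered componentwise.\<close>
definition interval_product :: "'a::{finite,complete_lattice} set \<Rightarrow> ('a \<Rightarrow> 'a) set" where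
  "interval_product M = {f. (\<forall>G\<in>M. f G \<le> G) \<and> (\<forall>G. G \<notin> M \<longrightarrow> f G = bot)}"

definition building_set :: "'a::{finite,complete_lattice} set \<Rightarrow> bool" where
  "building_set \<G> \<longleftrightarrow> \<G> \<subseteq> - {bot} \<and>
     (\<forall>X. X \<noteq> bot \<longrightarrow>
       (let M = maximals {G \<in> \<G>. G \<le> X} in
        \<exists>\<phi>. bij_betw \<phi> (interval_product M) {Z. Z \<le> X} \<and>
            (\<forall>f\<in>interval_product M. \<forall>g\<in>interval_product M.
                 (\<phi> f \<le> \<phi> g) \<longleftrightarrow> (\<forall>G\<in>M. f G \<le> g G)) \<and>
            (\<forall>G\<in>M. \<phi> (\<lambda>H. if H = G then G else bot) = G)))"

definition nested :: "'a::{finite,complete_lattice} set \<Rightarrow> 'a set \<Rightarrow> bool" where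
  "nested \<G> S \<longleftrightarrow> S \<subseteq> \<G> \<and>
     (\<forall>T \<subseteq> S. card T \<ge> 2 \<and> (\<forall>x\<in>T. \<forall>y\<in>T. x \<le> y \<longrightarrow> x = y) \<longrightarrow> Sup T \<notin> \<G>)"

definition dist_atoms :: "'a::{finite,complete_lattice} \<Rightarrow> 'a \<Rightarrow> nat" where
  "dist_atoms X Y = (LEAST d. \<exists>Hs. Hs \<subseteq> atoms \<and> card Hs = d \<and> Y = sup X (Sup Hs))"

type_synonym 'a zpoly = "('a \<Rightarrow>\<^sub>0 nat) \<Rightarrow>\<^sub>0 int"

definition var :: "'a \<Rightarrow> 'a zpoly" where
  "var G = Poly_Mapping.single (Poly_Mapping.single G 1) 1"

definition ideal_generated :: "'r::comm_ring_1 set \<Rightarrow> 'r set" where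
  "ideal_generated S = \<Inter>{I. S \<subseteq> I \<and> 0 \<in> I \<and> (\<forall>x\<in>I. \<forall>y\<in>I. x + y \<in> I)
                            \<and> (\<forall>r. \<forall>x\<in>I. r * x \<in> I)}"

end

theory Submission
  imports Defs "HOL-Library.FuncSet"
begin

lemma maximals_exists:
  fixes T :: "'a::{finite,order} set"  
  assumes "t \<in> T" shows "\<exists>m\<in>maximals T. t \<le> m"
proof -
  obtain m where "m \<in> T" "t \<le> m" "\<forall>b\<in>T. m \<le> b \<longrightarrow> m = b"
    using finite_has_maximal2[of T t] assms by auto
  then show ?thesis unfolding maximals_def by (auto simp: less_le)
qed

lemma key_nested:
  fixes \<G> :: "'a::{finite,complete_lattice} set"
  assumes bs: "building_set \<G>" and ne: "nested \<G> S" and B: "B \<in> \<G>" "B \<le> Sup S"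
  shows "\<exists>s\<in>S. B \<le> s"
proof -
  define X where "X = Sup S"
  have Sg: "S \<subseteq> \<G>" using ne unfolding nested_def by auto
  have nb: "\<forall>G\<in>\<G>. G \<noteq> bot" using bs unfolding building_set_def by auto
  have "X \<noteq> bot" using B nb X_def by (metis bot_unique)
  define M where "M = maximals {G \<in> \<G>. G \<le> X}"
  obtain \<phi> where bij: "bij_betw \<phi> (interval_product M) {Z. Z \<le> X}"
    and ord: "\<And>f g. f\<in>interval_product M \<Longrightarrow> g\<in>interval_product M \<Longrightarrow>
                 (\<phi> f \<le> \<phi> g) \<longleftrightarrow> (\<forall>G\<in>M. f G \<le> g G)"
    and unit: "\<And>G. G\<in>M \<Longrightarrow> \<phi> (\<lambda>H. if H = G then G else bot) = G"
  proof -
    have "let M = maximals {G \<in> \<G>. G \<le> X} in \<exists>\<phi>. bij_betw \<phi> (interval_product M) {Z. Z \<le> X} \<and>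
            (\<forall>f\<in>interval_product M. \<forall>g\<in>interval_product M.
                 (\<phi> f \<le> \<phi> g) \<longleftrightarrow> (\<forall>G\<in>M. f G \<le> g G)) \<and>
            (\<forall>G\<in>M. \<phi> (\<lambda>H. if H = G then G else bot) = G)"
      using bs \<open>X \<noteq> bot\<close> unfolding building_set_def by blast
    then have "\<exists>\<phi>. bij_betw \<phi> (interval_product M) {Z. Z \<le> X} \<and>
            (\<forall>f\<in>interval_product M. \<forall>g\<in>interval_product M.
                 (\<phi> f \<le> \<phi> g) \<longleftrightarrow> (\<forall>G\<in>M. f G \<le> g G)) \<and>
            (\<forall>G\<in>M. \<phi> (\<lambda>H. if H = G then G else bot) = G)"
      unfolding Let_def M_def .
    then show ?thesis using that by blast
  qed
  define P where "P = interval_product M"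
  define \<psi> where "\<psi> = inv_into P \<phi>"
  have psiP: "\<And>Z. Z \<le> X \<Longrightarrow> \<psi> Z \<in> P" using bij unfolding \<psi>_def P_def
    by (metis bij_betw_imp_surj_on inv_into_into mem_Collect_eq)
  have phipsi: "\<And>Z. Z \<le> X \<Longrightarrow> \<phi> (\<psi> Z) = Z" using bij unfolding \<psi>_def P_def
    by (metis bij_betw_imp_surj_on f_inv_into_f mem_Collect_eq)
  have phiX: "\<And>f. f \<in> P \<Longrightarrow> \<phi> f \<le> X" using bij unfolding P_def
    by (auto dest: bij_betw_apply)
  have ord': "\<And>f g. f\<in>P \<Longrightarrow> g\<in>P \<Longrightarrow> (\<phi> f \<le> \<phi> g) \<longleftrightarrow> (\<forall>G\<in>M. f G \<le> g G)"
    using ord P_def by auto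
  have inP: "\<And>f. f \<in> P \<longleftrightarrow> (\<forall>G\<in>M. f G \<le> G) \<and> (\<forall>G. G \<notin> M \<longrightarrow> f G = bot)"
    unfolding P_def interval_product_def by auto
  have MG: "\<And>G. G \<in> M \<Longrightarrow> G \<in> \<G> \<and> G \<le> X" unfolding M_def maximals_def by auto
  have underM: "\<And>G. G \<in> \<G> \<Longrightarrow> G \<le> X \<Longrightarrow> \<exists>F\<in>M. G \<le> F"
    unfolding M_def by (rule maximals_exists) auto
  obtain F where F: "F \<in> M" "B \<le> F" using underM[OF B(1)] B(2) X_def by auto
  define e where "e = (\<lambda>G H. if H = G then G else (bot::'a))"
  have eP: "\<And>G. G \<in> M \<Longrightarrow> e G \<in> P" unfolding inP e_def by auto
  have phie: "\<And>G. G \<in> M \<Longrightarrow> \<phi> (e G) = G" using unit e_def by auto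
  define c where "c = (\<lambda>H. if H \<in> M then H else (bot::'a))"
  have cP: "c \<in> P" unfolding inP c_def by auto
  have full: "\<forall>G\<in>M. v G = G" if vP: "v \<in> P" and vS: "\<forall>s\<in>S. s \<le> \<phi> v" for v
  proof -
    have "X \<le> \<phi> v" unfolding X_def using vS by (simp add: Sup_least)
    then have "\<phi> (\<psi> X) \<le> \<phi> v" using phipsi by simp
    then have 1: "\<forall>G\<in>M. \<psi> X G \<le> v G" using ord'[OF psiP[OF order_refl] vP] by simp
    have "\<phi> c \<le> \<phi> (\<psi> X)" using phiX cP phipsi by simp
    then have 2: "\<forall>G\<in>M. c G \<le> \<psi> X G" using ord'[OF cP psiP[OF order_refl]] by simp
    show ?thesis
    proof
      fix G assume G: "G \<in> M"
      have a: "v G \<le> G" using vP G unfolding inP by blast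
      have "c G = G" using G c_def by simp
      then have b: "G \<le> v G" using 1 2 G by (metis order.trans)
      show "v G = G" using a b by (rule order.antisym)
    qed
  qed
  define T where "T = {s \<in> S. s \<le> F}"
  define Y where "Y = Sup T"
  have YF: "Y \<le> F" unfolding Y_def T_def by (auto intro: Sup_least)
  have FX: "F \<le> X" using MG F by auto
  have YX: "Y \<le> X" using YF FX by auto
  define v where "v = (\<lambda>H. if H = F then \<psi> Y F else c H)"
  have vP: "v \<in> P" using psiP[OF YX] F unfolding inP v_def c_def by auto
  have sX: "\<And>s. s \<in> S \<Longrightarrow> s \<le> X" unfolding X_def by (simp add: Sup_upper)
  have "\<forall>s\<in>S. s \<le> \<phi> v"
  proof
    fix s assume s: "s \<in> S"
    have psP: "\<psi> s \<in> P" using psiP sX s by auto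
    have "\<forall>G\<in>M. \<psi> s G \<le> v G"
    proof
      fix G assume G: "G \<in> M"
      show "\<psi> s G \<le> v G"
      proof (cases "G = F")
        case False then show ?thesis using psP G inP unfolding v_def c_def by auto
      next
        case True
        show ?thesis
        proof (cases "s \<le> F")
          case True
          then have "s \<le> Y" unfolding Y_def T_def using s by (simp add: Sup_upper)
          then have "\<phi> (\<psi> s) \<le> \<phi> (\<psi> Y)" using phipsi sX s YX by simp
          then have "\<forall>G\<in>M. \<psi> s G \<le> \<psi> Y G" using ord'[OF psP psiP[OF YX]] by simp
          then show ?thesis using F(1) \<open>G = F\<close> unfolding v_def by simp
        next
          case False
          obtain F' where F': "F' \<in> M" "s \<le> F'" using underM Sg s sX by blast
          have "F' \<noteq> F" using False F' by auto
          have "\<phi> (\<psi> s) \<le> \<phi> (e F')" using phipsi phie F' sX s by simp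
          then have "\<forall>G\<in>M. \<psi> s G \<le> e F' G" using ord'[OF psP eP[OF F'(1)]] by simp
          then have "\<psi> s F \<le> e F' F" using F(1) by blast
          then show ?thesis using \<open>F' \<noteq> F\<close> \<open>G = F\<close> unfolding e_def by (auto simp: bot_unique)
        qed
      qed
    qed
    then have "\<phi> (\<psi> s) \<le> \<phi> v" using ord'[OF psP vP] by simp
    then show "s \<le> \<phi> v" using phipsi sX s by simp
  qed
  then have "v F = F" using full vP F by auto
  then have "\<psi> Y F = F" unfolding v_def by simp
  then have "\<forall>G\<in>M. e F G \<le> \<psi> Y G" unfolding e_def by auto
  then have "\<phi> (e F) \<le> \<phi> (\<psi> Y)" using ord'[OF eP[OF F(1)] psiP[OF YX]] by simp
  then have "F \<le> Y" using phie F phipsi YX by simp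
  then have YF2: "Y = F" using YF by auto
  have Fnb: "F \<noteq> bot" using nb MG F by auto
  have mT: "maximals T \<subseteq> T" unfolding maximals_def by auto
  have SupmT: "Sup (maximals T) = Y"
  proof (rule order.antisym)
    show "Sup (maximals T) \<le> Y" unfolding Y_def using mT by (simp add: Sup_subset_mono)
    show "Y \<le> Sup (maximals T)" unfolding Y_def
      by (rule Sup_least) (meson Sup_upper maximals_exists order.trans)
  qed
  have "T \<noteq> {}" using YF2 Fnb Y_def by auto
  then obtain m where m: "m \<in> maximals T" using maximals_exists by blast
  have anti: "\<forall>x\<in>maximals T. \<forall>y\<in>maximals T. x \<le> y \<longrightarrow> x = y"
    unfolding maximals_def by (auto simp: less_le)
  have "\<not> card (maximals T) \<ge> 2"
  proof
    assume "card (maximals T) \<ge> 2"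
    moreover have "maximals T \<subseteq> S" using mT unfolding T_def by auto
    moreover have nd: "\<forall>T'\<subseteq>S. card T' \<ge> 2 \<and> (\<forall>x\<in>T'. \<forall>y\<in>T'. x \<le> y \<longrightarrow> x = y) \<longrightarrow> Sup T' \<notin> \<G>"
      using ne unfolding nested_def by (rule conjunct2)
    ultimately have "Sup (maximals T) \<notin> \<G>" using anti by simp
    then show False using SupmT YF2 MG F by auto
  qed
  moreover have "finite (maximals T)" by simp
  ultimately have "maximals T = {m}"
  proof -
    assume c2: "\<not> card (maximals T) \<ge> 2" and fin: "finite (maximals T)"
    have "x = m" if x: "x \<in> maximals T" for x
    proof (rule ccontr)
      assume "x \<noteq> m"
      then have "card {x, m} = 2" by simp
      moreover have "card {x, m} \<le> card (maximals T)" using x m fin by (intro card_mono) auto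
      ultimately show False using c2 by simp
    qed
    then show ?thesis using m by blast
  qed
  then have "m = F" using SupmT YF2 by simp
  then show ?thesis using m mT F unfolding T_def by auto
qed

lemma ig_base: "x \<in> S \<Longrightarrow> x \<in> ideal_generated S"
  unfolding ideal_generated_def by auto
lemma ig_add: "x \<in> ideal_generated S \<Longrightarrow> y \<in> ideal_generated S \<Longrightarrow> x + y \<in> ideal_generated S"
  unfolding ideal_generated_def by auto
lemma ig_mult: "x \<in> ideal_generated S \<Longrightarrow> r * x \<in> ideal_generated S"
  unfolding ideal_generated_def by auto
lemma ig_zero: "0 \<in> ideal_generated S"
  unfolding ideal_generated_def by auto
lemma ig_dvd: "x \<in> ideal_generated S \<Longrightarrow> x dvd y \<Longrightarrow> y \<in> ideal_generated S"
proof -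
  assume x: "x \<in> ideal_generated S" and "x dvd y"
  from \<open>x dvd y\<close> obtain k where "y = x * k" by (rule dvdE)
  then have "y = k * x" by (simp add: mult.commute)
  then show ?thesis using ig_mult[OF x] by simp
qed
lemma ig_diff: "x \<in> ideal_generated S \<Longrightarrow> y \<in> ideal_generated S \<Longrightarrow> x - y \<in> ideal_generated S"
  using ig_add[of x S "(-1) * y"] ig_mult[of y S "-1"] by simp
lemma ig_sum: "finite A \<Longrightarrow> (\<And>a. a \<in> A \<Longrightarrow> f a \<in> ideal_generated S) \<Longrightarrow> sum f A \<in> ideal_generated S"
  by (induction A rule: finite_induct) (auto intro: ig_add ig_zero)
lemma ig_mono: "S \<subseteq> ideal_generated T \<Longrightarrow> ideal_generated S \<subseteq> ideal_generated T"
proof -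
  assume a: "S \<subseteq> ideal_generated T"
  have "ideal_generated T \<in> {I. S \<subseteq> I \<and> 0 \<in> I \<and> (\<forall>x\<in>I. \<forall>y\<in>I. x + y \<in> I) \<and> (\<forall>r. \<forall>x\<in>I. r * x \<in> I)}"
    using a ig_zero ig_add ig_mult by blast
  then show ?thesis unfolding ideal_generated_def[of S] by blast
qed

lemma prod_image_dvd:
  fixes g :: "'b \<Rightarrow> 'c::comm_monoid_mult"
  shows "finite K \<Longrightarrow> (\<Prod>x\<in>f ` K. g x) dvd (\<Prod>y\<in>K. g (f y))"
proof (induction K rule: finite_induct)
  case empty then show ?case by simp
next
  case (insert y K)
  show ?case
  proof (cases "f y \<in> f ` K")
    case True
    then have "f ` insert y K = f ` K" by auto
    then show ?thesis using insert by (simp add: dvd_mult)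
  next
    case False
    then show ?thesis using insert by (simp add: mult_dvd_mono)
  qed
qed

lemma prod_union_dvd:
  fixes g :: "'b \<Rightarrow> 'c::comm_monoid_mult"
  assumes "finite A" "finite D"
  shows "(\<Prod>x\<in>A \<union> D. g x) dvd (\<Prod>x\<in>A. g x) * (\<Prod>x\<in>D. g x)"
proof -
  have "(\<Prod>x\<in>A. g x) * (\<Prod>x\<in>D. g x) = (\<Prod>x\<in>A \<union> D. g x) * (\<Prod>x\<in>A \<inter> D. g x)"
    using prod.union_inter[OF assms, of g] by simp
  then show ?thesis by (rule dvdI)
qed

lemma atom_in_G:
  fixes \<G> :: "'a::{finite,complete_lattice} set"
  assumes bs: "building_set \<G>" and H: "H \<in> atoms"
  shows "H \<in> \<G>"
proof (rule ccontr)
  assume nH: "H \<notin> \<G>"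
  have Hb: "bot < H" using H unfolding atoms_def by auto
  have nb: "\<forall>G\<in>\<G>. G \<noteq> bot" using bs unfolding building_set_def by auto
  have "{G \<in> \<G>. G \<le> H} = {}"
  proof -
    { fix G assume "G \<in> \<G>" "G \<le> H"
      moreover have "bot < G" using nb \<open>G \<in> \<G>\<close> by (simp add: bot_less)
      ultimately have "G = H" using H unfolding atoms_def by blast
      then have False using nH \<open>G \<in> \<G>\<close> by simp }
    then show ?thesis by auto
  qed
  then have M: "maximals {G \<in> \<G>. G \<le> H} = {}" unfolding maximals_def by auto
  have "H \<noteq> bot" using Hb by simp
  then have "let M = maximals {G \<in> \<G>. G \<le> H} in \<exists>\<phi>. bij_betw \<phi> (interval_product M) {Z. Z \<le> H} \<and>
            (\<forall>f\<in>interval_product M. \<forall>g\<in>interval_product M.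
                 (\<phi> f \<le> \<phi> g) \<longleftrightarrow> (\<forall>G\<in>M. f G \<le> g G)) \<and>
            (\<forall>G\<in>M. \<phi> (\<lambda>H. if H = G then G else bot) = G)"
    using bs unfolding building_set_def by blast
  then have "\<exists>\<phi>. bij_betw \<phi> (interval_product ({}::'a set)) {Z. Z \<le> H}"
    unfolding Let_def M by blast
  then obtain \<phi> where bij: "bij_betw \<phi> (interval_product ({}::'a set)) {Z. Z \<le> H}" by blast
  have "interval_product ({}::'a set) = {\<lambda>_. bot}" unfolding interval_product_def by auto
  then have "\<phi> ` {\<lambda>_. bot} = {Z. Z \<le> H}" using bij_betw_imp_surj_on[OF bij] by simp
  then have e: "{Z. Z \<le> H} = {\<phi> (\<lambda>_. bot)}" by simp
  have "bot \<in> {Z. Z \<le> H}" "H \<in> {Z. Z \<le> H}" by auto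
  then have "bot = H" unfolding e by simp
  then show False using Hb by simp
qed

lemma g_in:
  fixes \<G> :: "'a::{finite,complete_lattice} set"
  assumes at: "atomic_lattice TYPE('a)" and bs: "building_set \<G>"
    and B: "B \<in> \<G>" and PB: "Sup P < B" and PG: "P \<subseteq> \<G>"
  shows "(\<Prod>A\<in>P. var A) * (\<Sum>G\<in>{G \<in> \<G>. B \<le> G}. var G) ^ dist_atoms (Sup P) B
     \<in> ideal_generated
           ({(\<Prod>G\<in>S. var G) | S. S \<subseteq> \<G> \<and> \<not> nested \<G> S}
            \<union> {(\<Sum>G\<in>{G \<in> \<G>. H \<le> G}. var G) | H. H \<in> atoms})"
    (is "_ \<in> ?I")
proof -
  define d where "d = dist_atoms (Sup P) B"
  have ex: "\<exists>d Hs. Hs \<subseteq> atoms \<and> card Hs = d \<and> B = sup (Sup P) (Sup Hs)"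
  proof (intro exI[of _ "card {H \<in> atoms. H \<le> B}"] exI[of _ "{H \<in> atoms. H \<le> B}"] conjI)
    have "B = Sup {H \<in> atoms. H \<le> B}" using at unfolding atomic_lattice_def by blast
    then show "B = sup (Sup P) (Sup {H \<in> atoms. H \<le> B})" using PB
      by (metis le_iff_sup less_imp_le sup.commute)
  qed auto
  obtain Hs where Hs: "Hs \<subseteq> atoms" "card Hs = d" "B = sup (Sup P) (Sup Hs)"
    using LeastI_ex[OF ex] unfolding d_def dist_atoms_def by blast
  define mon where "mon = (\<Prod>A\<in>P. var A)"
  define \<sigma> where "\<sigma> = (\<lambda>X. \<Sum>G\<in>{G \<in> \<G>. X \<le> G}. (var G :: 'a zpoly))"
  define C where "C = (\<lambda>h. {G \<in> \<G>. h \<le> G \<and> \<not> B \<le> G})"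
  define \<tau> where "\<tau> = (\<lambda>h. \<Sum>G\<in>C h. (var G :: 'a zpoly))"
  have hB: "\<And>h. h \<in> Hs \<Longrightarrow> h \<le> B" using Hs(3) by (metis Sup_upper le_supI2)
  have split: "\<sigma> h = \<sigma> B + \<tau> h" if h: "h \<in> Hs" for h
  proof -
    have "{G \<in> \<G>. h \<le> G} = {G \<in> \<G>. B \<le> G} \<union> C h" using hB[OF h] unfolding C_def by auto
    then show ?thesis unfolding \<sigma>_def \<tau>_def
      by (simp add: sum.union_disjoint C_def disjoint_iff)
  qed
  have sigI: "\<sigma> h \<in> ?I" if "h \<in> Hs" for h
    using that Hs(1) unfolding \<sigma>_def by (intro ig_base UnI2 CollectI exI[of _ h]) auto
  have cong: "K \<subseteq> Hs \<Longrightarrow> mon * (\<Prod>h\<in>K. \<sigma> B) - mon * (\<Prod>h\<in>K. - \<tau> h) \<in> ?I" for K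
  proof (induction K rule: infinite_finite_induct)
    case (infinite K) then show ?case by (simp add: ig_zero)
  next
    case empty then show ?case by (simp add: ig_zero)
  next
    case (insert x K)
    define X where "X = (\<Prod>h\<in>K. \<sigma> B)"
    define Y where "Y = (\<Prod>h\<in>K. - \<tau> h)"
    have e: "mon * (\<Prod>h\<in>insert x K. \<sigma> B) - mon * (\<Prod>h\<in>insert x K. - \<tau> h)
        = \<sigma> B * (mon * X - mon * Y) + (mon * Y) * (\<sigma> B + \<tau> x)"
      using insert(1,2) unfolding X_def Y_def by (simp add: algebra_simps)
    have xH: "x \<in> Hs" and KH: "K \<subseteq> Hs" using insert(4) by auto
    have s1: "\<sigma> B + \<tau> x \<in> ?I" using split[OF xH] sigI[OF xH] by simp
    have s2: "mon * X - mon * Y \<in> ?I" using insert(3)[OF KH] unfolding X_def Y_def .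
    show ?case unfolding e by (intro ig_add ig_mult s1 s2)
  qed
  have mainmon: "mon * (\<Prod>h\<in>Hs. \<tau> h) \<in> ?I"
  proof -
    have fin: "\<And>h. finite (C h)" by simp
    have "mon * (\<Prod>h\<in>Hs. \<tau> h) = (\<Sum>f\<in>PiE Hs C. mon * (\<Prod>h\<in>Hs. var (f h)))"
      unfolding \<tau>_def by (simp add: prod_sum_PiE sum_distrib_left)
    also have "\<dots> \<in> ?I"
    proof (rule ig_sum, simp)
      fix f assume f: "f \<in> PiE Hs C"
      define S where "S = P \<union> f ` Hs"
      have SG: "S \<subseteq> \<G>" using PG f unfolding S_def C_def by (auto simp: PiE_iff)
      have "\<not> nested \<G> S"
      proof
        assume ne: "nested \<G> S"
        have "Sup P \<le> Sup S" unfolding S_def by (simp add: Sup_subset_mono)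
        moreover have "Sup Hs \<le> Sup S"
        proof (rule Sup_least)
          fix h assume h: "h \<in> Hs"
          then have "h \<le> f h" using f unfolding C_def by (auto simp: PiE_iff)
          also have "f h \<le> Sup S" unfolding S_def using h by (simp add: Sup_upper)
          finally show "h \<le> Sup S" .
        qed
        ultimately have "B \<le> Sup S" using Hs(3) by simp
        then obtain s where s: "s \<in> S" "B \<le> s" using key_nested[OF bs ne B] by blast
        show False
        proof (cases "s \<in> P")
          case True
          then have "s \<le> Sup P" by (simp add: Sup_upper)
          then show False using s PB by (meson leD order.trans)
        next
          case False
          then obtain h where "h \<in> Hs" "s = f h" using s unfolding S_def by auto
          then show False using f s unfolding C_def by (auto simp: PiE_iff)
        qed
      qed
      then have "(\<Prod>G\<in>S. var G) \<in> ?I" using SG by (intro ig_base UnI1 CollectI exI[of _ S]) simp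
      moreover have "(\<Prod>G\<in>S. var G) dvd mon * (\<Prod>h\<in>Hs. var (f h))"
      proof -
        have "(\<Prod>G\<in>S. var G) dvd mon * (\<Prod>G\<in>f ` Hs. var G)"
          unfolding S_def mon_def by (rule prod_union_dvd) auto
        also have "\<dots> dvd mon * (\<Prod>h\<in>Hs. var (f h))"
          by (intro mult_dvd_mono dvd_refl prod_image_dvd) simp
        finally show ?thesis .
      qed
      ultimately show "mon * (\<Prod>h\<in>Hs. var (f h)) \<in> ?I" by (rule ig_dvd)
    qed
    finally show ?thesis .
  qed
  have negI: "mon * (\<Prod>h\<in>Hs. - \<tau> h) \<in> ?I"
  proof -
    have "mon * (\<Prod>h\<in>Hs. - \<tau> h) = (-1) ^ card Hs * (mon * (\<Prod>h\<in>Hs. \<tau> h))"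
      by (simp only: prod_uminus mult.left_commute)
    then show ?thesis by (simp only:) (rule ig_mult[OF mainmon])
  qed
  have "mon * \<sigma> B ^ d = (mon * (\<Prod>h\<in>Hs. \<sigma> B) - mon * (\<Prod>h\<in>Hs. - \<tau> h)) + mon * (\<Prod>h\<in>Hs. - \<tau> h)"
    using Hs(2) by simp
  also have "\<dots> \<in> ?I" using cong[OF order_refl] negI by (rule ig_add)
  finally have "mon * \<sigma> B ^ d \<in> ?I" .
  then show ?thesis by (simp only: mon_def \<sigma>_def d_def)
qed

lemma dist_bot_atom:
  fixes H :: "'a::{finite,complete_lattice}"
  assumes H: "H \<in> atoms"
  shows "dist_atoms bot H = 1"
  unfolding dist_atoms_def
proof (rule Least_equality)
  show "\<exists>Hs. Hs \<subseteq> atoms \<and> card Hs = 1 \<and> H = sup bot (Sup Hs)"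
    using H by (intro exI[of _ "{H}"]) simp
next
  fix y assume "\<exists>Hs. Hs \<subseteq> atoms \<and> card Hs = y \<and> H = sup bot (Sup Hs)"
  then obtain Hs where Hs: "Hs \<subseteq> atoms" "card Hs = y" "H = sup bot (Sup Hs)" by blast
  have "bot < H" using H unfolding atoms_def by simp
  show "1 \<le> y"
  proof (rule ccontr)
    assume "\<not> 1 \<le> y"
    then have "card Hs = 0" using Hs(2) by simp
    then have "Hs = {}" by (simp add: card_eq_0_iff)
    then show False using Hs(3) \<open>bot < H\<close> by simp
  qed
qed

lemma nested_empty: "nested \<G> {}"
  unfolding nested_def by auto

theorem theorem3p2:
  fixes \<G> :: "'a::{finite,complete_lattice} set"
  assumes "atomic_lattice TYPE('a)"
    and "building_set \<G>"
  shows "ideal_generated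
           ({(\<Prod>G\<in>S. var G) | S. S \<subseteq> \<G> \<and> \<not> nested \<G> S}
            \<union> {(\<Sum>G\<in>{G \<in> \<G>. H \<le> G}. var G) | H. H \<in> atoms})
       = ideal_generated
           ({(\<Prod>G\<in>S. var G) | S. S \<subseteq> \<G> \<and> \<not> nested \<G> S}
            \<union> {(\<Prod>A\<in>maximals \<H>. var A) * (\<Sum>G\<in>{G \<in> \<G>. B \<le> G}. var G) ^ dist_atoms (Sup (maximals \<H>)) B
                 | \<H> B. nested \<G> \<H> \<and> B \<in> \<G> \<and> Sup (maximals \<H>) < B})"
    (is "ideal_generated (?N \<union> ?L) = ideal_generated (?N \<union> ?R)")
proof (rule equalityI)
  show "ideal_generated (?N \<union> ?L) \<subseteq> ideal_generated (?N \<union> ?R)"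
  proof (rule ig_mono, rule subsetI)
    fix x assume "x \<in> ?N \<union> ?L"
    then consider "x \<in> ?N" | "x \<in> ?L" by blast
    then show "x \<in> ideal_generated (?N \<union> ?R)"
    proof cases
      case 1 then show ?thesis by (intro ig_base UnI1)
    next
      case 2
      then obtain H where x: "x = (\<Sum>G\<in>{G \<in> \<G>. H \<le> G}. var G)" and H: "H \<in> atoms" by blast
      have HG: "H \<in> \<G>" using atom_in_G[OF assms(2) H] .
      have Hb: "bot < H" using H unfolding atoms_def by simp
      have m: "maximals ({}::'a set) = {}" unfolding maximals_def by simp
      have "x \<in> ?R"
        by (intro CollectI exI[of _ "{}"] exI[of _ H])
           (simp add: x m dist_bot_atom[OF H] nested_empty HG Hb)
      then show ?thesis by (intro ig_base UnI2)
    qed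
  qed
next
  show "ideal_generated (?N \<union> ?R) \<subseteq> ideal_generated (?N \<union> ?L)"
  proof (rule ig_mono, rule subsetI)
    fix x assume "x \<in> ?N \<union> ?R"
    then consider "x \<in> ?N" | "x \<in> ?R" by blast
    then show "x \<in> ideal_generated (?N \<union> ?L)"
    proof cases
      case 1 then show ?thesis by (intro ig_base UnI1)
    next
      case 2
      then obtain \<H> B where x: "x = (\<Prod>A\<in>maximals \<H>. var A) * (\<Sum>G\<in>{G \<in> \<G>. B \<le> G}. var G) ^ dist_atoms (Sup (maximals \<H>)) B"
        and ne: "nested \<G> \<H>" and B: "B \<in> \<G>" and lt: "Sup (maximals \<H>) < B" by blast
      have "maximals \<H> \<subseteq> \<G>" using ne unfolding nested_def maximals_def by auto
      then show ?thesis unfolding x using g_in[OF assms B lt] by simp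
    qed
  qed
qed

end
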